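(* Every connected $4$-regular graph of order at least $7$ has a foresty minimum vertex cut.
   Context: All graphs are finite and simple. A vertex cut of a connected graph $G$ is a set $S\subset V(G)$ such that $G-S$ is disconnected. If $G$ has connectivity $k$, a vertex cut $S$ is called minimum if $|S|=k$. A vertex cut $S$ is called a foresty vertex cut if the induced subgraph $G[S]$ is a forest. *)

theory Defs
  imports Main
begin

definition simple_graph :: "'a set \<Rightarrow> ('a \<Rightarrow> 'a \<Rightarrow> bool) \<Rightarrow> bool" where
  "simple_graph V E \<longleftrightarrow> finite V \<and> (\<forall>x y. E x y \<longrightarrow> x \<in> V \<and> y \<in> V)
     \<and> (\<forall>x y. E x y \<longrightarrow> E y x) \<and> (\<forall>x. \<not> E x x)"

definition degree :: "('a \<Rightarrow> 'a \<Rightarrow> bool) \<Rightarrow> 'a \<Rightarrow> nat" where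
  "degree E x = card {y. E x y}"

definition regular :: "'a set \<Rightarrow> ('a \<Rightarrow> 'a \<Rightarrow> bool) \<Rightarrow> nat \<Rightarrow> bool" where
  "regular V E k \<longleftrightarrow> (\<forall>x\<in>V. degree E x = k)"

definition induced :: "('a \<Rightarrow> 'a \<Rightarrow> bool) \<Rightarrow> 'a set \<Rightarrow> 'a \<Rightarrow> 'a \<Rightarrow> bool" where
  "induced E S x y \<longleftrightarrow> E x y \<and> x \<in> S \<and> y \<in> S"

definition connected_graph :: "'a set \<Rightarrow> ('a \<Rightarrow> 'a \<Rightarrow> bool) \<Rightarrow> bool" where
  "connected_graph V E \<longleftrightarrow> V \<noteq> {} \<and> (\<forall>x\<in>V. \<forall>y\<in>V. (induced E V)\<^sup>*\<^sup>* x y)"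

definition disconnected_graph :: "'a set \<Rightarrow> ('a \<Rightarrow> 'a \<Rightarrow> bool) \<Rightarrow> bool" where
  "disconnected_graph V E \<longleftrightarrow> (\<exists>x\<in>V. \<exists>y\<in>V. \<not> (induced E V)\<^sup>*\<^sup>* x y)"

definition vertex_cut :: "'a set \<Rightarrow> ('a \<Rightarrow> 'a \<Rightarrow> bool) \<Rightarrow> 'a set \<Rightarrow> bool" where
  "vertex_cut V E S \<longleftrightarrow> S \<subseteq> V \<and> disconnected_graph (V - S) E"

definition min_vertex_cut :: "'a set \<Rightarrow> ('a \<Rightarrow> 'a \<Rightarrow> bool) \<Rightarrow> 'a set \<Rightarrow> bool" where
  "min_vertex_cut V E S \<longleftrightarrow> vertex_cut V E S \<and> (\<forall>T. vertex_cut V E T \<longrightarrow> card S \<le> card T)"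

definition is_cycle :: "'a set \<Rightarrow> ('a \<Rightarrow> 'a \<Rightarrow> bool) \<Rightarrow> 'a list \<Rightarrow> bool" where
  "is_cycle V E cs \<longleftrightarrow> length cs \<ge> 3 \<and> distinct cs \<and> set cs \<subseteq> V
     \<and> (\<forall>i < length cs. E (cs ! i) (cs ! ((i + 1) mod length cs)))"

definition forest :: "'a set \<Rightarrow> ('a \<Rightarrow> 'a \<Rightarrow> bool) \<Rightarrow> bool" where
  "forest V E \<longleftrightarrow> \<not> (\<exists>cs. is_cycle V E cs)"

definition foresty_vertex_cut :: "'a set \<Rightarrow> ('a \<Rightarrow> 'a \<Rightarrow> bool) \<Rightarrow> 'a set \<Rightarrow> bool" where
  "foresty_vertex_cut V E S \<longleftrightarrow> vertex_cut V E S \<and> forest S (induced E S)"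

end

theory Submission
  imports Defs
begin

definition side :: "'a set \<Rightarrow> ('a \<Rightarrow> 'a \<Rightarrow> bool) \<Rightarrow> 'a set \<Rightarrow> 'a set \<Rightarrow> bool" where
  "side V E S C \<longleftrightarrow> C \<subseteq> V - S \<and> C \<noteq> {} \<and> V - S - C \<noteq> {}
      \<and> (\<forall>x\<in>C. \<forall>y. E x y \<longrightarrow> y \<in> V - S \<longrightarrow> y \<in> C)"

lemma reach_closed:
  assumes "(induced E U)\<^sup>*\<^sup>* x y" "x \<in> C" "\<forall>x\<in>C. \<forall>y. E x y \<longrightarrow> y \<in> U \<longrightarrow> y \<in> C"
  shows "y \<in> C"
  using assms by (induction rule: rtranclp_induct) (auto simp: induced_def)

lemma side_cut: "S \<subseteq> V \<Longrightarrow> side V E S C \<Longrightarrow> vertex_cut V E S"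
proof -
  assume SV: "S \<subseteq> V" and sd: "side V E S C"
  obtain x where x: "x \<in> C" using sd unfolding side_def by blast
  obtain y where y: "y \<in> V - S - C" using sd unfolding side_def by blast
  have cl: "\<forall>x\<in>C. \<forall>y. E x y \<longrightarrow> y \<in> V - S \<longrightarrow> y \<in> C" using sd unfolding side_def by blast
  have "\<not> (induced E (V - S))\<^sup>*\<^sup>* x y"
  proof
    assume "(induced E (V - S))\<^sup>*\<^sup>* x y"
    hence "y \<in> C" by (rule reach_closed[OF _ x cl])
    thus False using y by simp
  qed
  moreover have "x \<in> V - S" using x sd unfolding side_def by blast
  moreover have "y \<in> V - S" using y by simp
  ultimately have "disconnected_graph (V - S) E" unfolding disconnected_graph_def by blast
  thus ?thesis using SV unfolding vertex_cut_def by simp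
qed

lemma reach_in: "(induced E U)\<^sup>*\<^sup>* x y \<Longrightarrow> x \<in> U \<Longrightarrow> y \<in> U"
  by (induction rule: rtranclp_induct) (simp_all add: induced_def)

lemma cut_side: "vertex_cut V E S \<Longrightarrow> \<exists>C. side V E S C"
proof -
  assume "vertex_cut V E S"
  then obtain x y where xy: "x \<in> V - S" "y \<in> V - S" "\<not> (induced E (V - S))\<^sup>*\<^sup>* x y"
    unfolding vertex_cut_def disconnected_graph_def by blast
  define C where "C = {z. (induced E (V - S))\<^sup>*\<^sup>* x z}"
  have CV: "C \<subseteq> V - S"
  proof
    fix z assume "z \<in> C"
    hence "(induced E (V - S))\<^sup>*\<^sup>* x z" unfolding C_def by simp
    thus "z \<in> V - S" using xy(1) by (rule reach_in)
  qed
  have cl: "\<forall>x\<in>C. \<forall>y. E x y \<longrightarrow> y \<in> V - S \<longrightarrow> y \<in> C"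
  proof (intro ballI allI impI)
    fix z w assume z: "z \<in> C" and e: "E z w" and w: "w \<in> V - S"
    have "induced E (V - S) z w" using z CV e w unfolding induced_def by blast
    moreover have "(induced E (V - S))\<^sup>*\<^sup>* x z" using z unfolding C_def by simp
    ultimately have "(induced E (V - S))\<^sup>*\<^sup>* x w" by (metis rtranclp.rtrancl_into_rtrancl)
    thus "w \<in> C" unfolding C_def by simp
  qed
  have "x \<in> C" unfolding C_def by simp
  moreover have "y \<in> V - S - C" using xy unfolding C_def by simp
  ultimately have "C \<noteq> {}" "V - S - C \<noteq> {}" by auto
  hence "side V E S C" using CV cl unfolding side_def by (intro conjI)
  then show ?thesis by blast
qed

lemma mincut_from: "min_vertex_cut V E S \<Longrightarrow> vertex_cut V E T \<Longrightarrow> card T \<le> card S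
   \<Longrightarrow> min_vertex_cut V E T"
proof -
  assume m: "min_vertex_cut V E S" and t: "vertex_cut V E T" and c: "card T \<le> card S"
  have "\<forall>U. vertex_cut V E U \<longrightarrow> card T \<le> card U"
  proof (intro allI impI)
    fix U assume "vertex_cut V E U"
    hence "card S \<le> card U" using m unfolding min_vertex_cut_def by simp
    thus "card T \<le> card U" using c by simp
  qed
  thus ?thesis using t unfolding min_vertex_cut_def by simp
qed

lemma rest_ne: "finite A \<Longrightarrow> card A < card V \<Longrightarrow> V - A \<noteq> {}"
proof
  assume f: "finite A" and c: "card A < card V" and e: "V - A = {}"
  have "finite V" using c card.infinite by fastforce
  moreover have "V \<subseteq> A" using e by blast
  ultimately have "card V \<le> card A" using f card_mono by blast
  thus False using c by simp
qed

lemma c2: "card {p,q} \<le> 2" using card_length[of "[p,q]"] by simp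
lemma c3: "card {p,q,r} \<le> 3" using card_length[of "[p,q,r]"] by simp
lemma c4: "card {p,q,r,t} \<le> 4" using card_length[of "[p,q,r,t]"] by simp
lemma c6: "card {p,q,r,t,u,w} \<le> 6" using card_length[of "[p,q,r,t,u,w]"] by simp
lemma c7: "card {p,q,r,t,u,w,z} \<le> 7" using card_length[of "[p,q,r,t,u,w,z]"] by simp

lemma forest_W:
  assumes sym: "\<And>x y. E x y \<Longrightarrow> E y x" and fW: "finite W" and cW: "card W \<le> 2"
    and light: "\<forall>x\<in>S-W. \<forall>y\<in>S. \<forall>z\<in>S. E x y \<longrightarrow> E x z \<longrightarrow> y = z"
  shows "forest S (induced E S)"
  unfolding forest_def
proof
  assume "\<exists>cs. is_cycle S (induced E S) cs"
  then obtain cs where cyc: "is_cycle S (induced E S) cs" by blast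
  define L where "L = length cs"
  have L3: "L \<ge> 3" and dis: "distinct cs" and sub: "set cs \<subseteq> S"
    and ed: "\<And>i. i < L \<Longrightarrow> induced E S (cs ! i) (cs ! ((i + 1) mod L))"
    using cyc unfolding is_cycle_def L_def by auto
  have "card (set cs) = L" using dis distinct_card L_def by metis
  have "\<not> set cs \<subseteq> W"
  proof
    assume "set cs \<subseteq> W"
    hence "card (set cs) \<le> card W" using card_mono fW by blast
    thus False using \<open>card (set cs) = L\<close> cW L3 by linarith
  qed
  then obtain x where x: "x \<in> set cs" "x \<notin> W" by blast
  then obtain i where i: "i < L" "cs ! i = x" by (metis in_set_conv_nth L_def)
  define j where "j = (if i = 0 then L - 1 else i - 1)"
  define k where "k = (if i = L - 1 then 0 else i + 1)"
  have kk: "k = (i + 1) mod L"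
  proof (cases "i = L - 1")
    case True
    hence "i + 1 = L" using L3 by linarith
    then show ?thesis using True unfolding k_def by simp
  next
    case False
    hence "i + 1 < L" using i by linarith
    then show ?thesis using False unfolding k_def by simp
  qed
  have jL: "j < L" unfolding j_def using i L3 by auto
  have kL: "k < L" unfolding k_def using i L3 by auto
  have j1: "(j + 1) mod L = i"
  proof (cases "i = 0")
    case True
    hence "j + 1 = L" unfolding j_def using L3 by simp
    then show ?thesis using True by simp
  next
    case False
    hence "j + 1 = i" unfolding j_def by simp
    then show ?thesis using i by simp
  qed
  have jk: "j \<noteq> k" unfolding j_def k_def using i L3 by (simp split: if_splits; linarith)
  have "induced E S (cs ! j) (cs ! i)" using ed[OF jL] j1 by simp
  hence e1: "E x (cs ! j)" "cs ! j \<in> S" using i sym[of "cs ! j" x] unfolding induced_def by auto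
  have "induced E S (cs ! i) (cs ! k)" using ed[OF i(1)] unfolding kk by simp
  hence e2: "E x (cs ! k)" "cs ! k \<in> S" using i unfolding induced_def by auto
  have "cs ! j \<noteq> cs ! k" using dis jL kL jk nth_eq_iff_index_eq L_def by metis
  moreover have "x \<in> S - W" using x sub by auto
  ultimately show False using light e1 e2 by blast
qed

context
  fixes V :: "'a set" and E :: "'a \<Rightarrow> 'a \<Rightarrow> bool"
  assumes sg: "simple_graph V E" and reg: "regular V E 4"
begin

lemma finV: "finite V" using sg simple_graph_def by auto
lemma sym: "E x y \<Longrightarrow> E y x" using sg unfolding simple_graph_def by blast
lemma inV1: "E x y \<Longrightarrow> x \<in> V" using sg unfolding simple_graph_def by blast
lemma inV2: "E x y \<Longrightarrow> y \<in> V" using sg unfolding simple_graph_def by blast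
lemma irr: "\<not> E x x" using sg unfolding simple_graph_def by blast
lemma finN: "finite {y. E x y}"
proof -
  have "{y. E x y} \<subseteq> V" using inV2 by blast
  thus ?thesis using finV by (rule finite_subset)
qed
lemma deg: "x \<in> V \<Longrightarrow> card {y. E x y} = 4" using reg by (simp add: regular_def degree_def)

lemma no5:
  assumes "x \<in> V" "distinct [p,q,r,s,t]" "E x p" "E x q" "E x r" "E x s" "E x t"
  shows False
proof -
  have "set [p,q,r,s,t] \<subseteq> {y. E x y}" using assms by auto
  hence "card (set [p,q,r,s,t]) \<le> 4" using card_mono[OF finN] deg assms(1) by metis
  moreover have "card (set [p,q,r,s,t]) = 5" using distinct_card[OF assms(2)] by simp
  ultimately show False by simp
qed

lemma nb4:
  assumes "x \<in> V" "distinct [p,q,r,t]" "E x p" "E x q" "E x r" "E x t"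
  shows "{y. E x y} = {p,q,r,t}"
proof -
  have s: "{p,q,r,t} \<subseteq> {y. E x y}" using assms by auto
  have "card {p,q,r,t} = 4" using distinct_card[OF assms(2)] by simp
  then show ?thesis using card_subset_eq[OF finN s] deg assms(1) by simp
qed

lemma side_sym: "side V E S C \<Longrightarrow> side V E S (V - S - C)"
proof -
  assume sd: "side V E S C"
  have C: "C \<subseteq> V - S" "C \<noteq> {}" "V - S - C \<noteq> {}"
    and cl: "\<forall>x\<in>C. \<forall>y. E x y \<longrightarrow> y \<in> V - S \<longrightarrow> y \<in> C"
    using sd unfolding side_def by auto
  have "V - S - (V - S - C) = C" using C(1) by blast
  moreover have "\<forall>x\<in>V - S - C. \<forall>y. E x y \<longrightarrow> y \<in> V - S \<longrightarrow> y \<in> V - S - C"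
  proof (intro ballI allI impI)
    fix x y assume x: "x \<in> V - S - C" and e: "E x y" and y: "y \<in> V - S"
    show "y \<in> V - S - C"
    proof (rule ccontr)
      assume "y \<notin> V - S - C"
      hence "y \<in> C" using y by blast
      moreover have "E y x" using e by (rule sym)
      ultimately have "x \<in> C" using cl x by blast
      thus False using x by blast
    qed
  qed
  ultimately show ?thesis using C unfolding side_def by simp
qed

lemma L1:
  assumes m: "min_vertex_cut V E S" and sd: "side V E S C" and s: "s \<in> S"
  shows "\<exists>c\<in>C. E s c"
proof (rule ccontr)
  assume n: "\<not> (\<exists>c\<in>C. E s c)"
  have SV: "S \<subseteq> V" using m unfolding min_vertex_cut_def vertex_cut_def by simp
  have C: "C \<subseteq> V - S" "C \<noteq> {}" "V - S - C \<noteq> {}"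
    and cl: "\<forall>x\<in>C. \<forall>y. E x y \<longrightarrow> y \<in> V - S \<longrightarrow> y \<in> C"
    using sd unfolding side_def by simp_all
  have cl2: "\<forall>x\<in>C. \<forall>y. E x y \<longrightarrow> y \<in> V - (S - {s}) \<longrightarrow> y \<in> C"
  proof (intro ballI allI impI)
    fix x y assume x: "x \<in> C" and e: "E x y" and y: "y \<in> V - (S - {s})"
    show "y \<in> C"
    proof (cases "y = s")
      case True
      hence "E s x" using sym[OF e] by simp
      thus ?thesis using n x by blast
    next
      case False
      hence "y \<in> V - S" using y by blast
      thus ?thesis using cl x e by blast
    qed
  qed
  have "s \<notin> C" using C(1) s by blast
  hence "s \<in> V - (S - {s}) - C" using s SV by blast
  hence ne: "V - (S - {s}) - C \<noteq> {}" by blast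
  have "C \<subseteq> V - (S - {s})" using C(1) by blast
  hence "side V E (S - {s}) C" using C(2) ne cl2 unfolding side_def by (intro conjI)
  moreover have "S - {s} \<subseteq> V" using SV by blast
  ultimately have "vertex_cut V E (S - {s})" using side_cut by blast
  hence "card S \<le> card (S - {s})" using m unfolding min_vertex_cut_def by simp
  moreover have "finite S" using SV finV by (rule finite_subset)
  hence "card (S - {s}) < card S" using s by (rule card_Diff1_less)
  ultimately show False by simp
qed

lemma L2:
  assumes m: "min_vertex_cut V E S" and sd: "side V E S C" and s: "s \<in> S" and c: "c \<in> C"
    and u: "\<forall>y\<in>C. E s y \<longrightarrow> y = c" and ne: "C - {c} \<noteq> {}"
  shows "min_vertex_cut V E (insert c (S - {s})) \<and> side V E (insert c (S - {s})) (C - {c})"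
proof -
  have SV: "S \<subseteq> V" using m unfolding min_vertex_cut_def vertex_cut_def by simp
  have C: "C \<subseteq> V - S" "C \<noteq> {}" "V - S - C \<noteq> {}"
    and cl: "\<forall>x\<in>C. \<forall>y. E x y \<longrightarrow> y \<in> V - S \<longrightarrow> y \<in> C"
    using sd unfolding side_def by simp_all
  have cV: "c \<in> V" "c \<notin> S" using C(1) c by blast+
  have sC: "s \<notin> C" using C(1) s by blast
  have cs: "c \<noteq> s" using cV s by blast
  have a1: "C - {c} \<subseteq> V - insert c (S - {s})" using C(1) by blast
  have "s \<in> V - insert c (S - {s}) - (C - {c})" using s SV cs sC by blast
  hence a2: "V - insert c (S - {s}) - (C - {c}) \<noteq> {}" by blast
  have a3: "\<forall>x\<in>C - {c}. \<forall>y. E x y \<longrightarrow> y \<in> V - insert c (S - {s}) \<longrightarrow> y \<in> C - {c}"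
  proof (intro ballI allI impI)
    fix x y assume x: "x \<in> C - {c}" and e: "E x y" and y: "y \<in> V - insert c (S - {s})"
    show "y \<in> C - {c}"
    proof (cases "y = s")
      case True
      hence "E s x" using sym[OF e] by simp
      hence "x = c" using u x by blast
      then show ?thesis using x by blast
    next
      case False
      hence "y \<in> V - S" using y by blast
      hence "y \<in> C" using cl x e by blast
      then show ?thesis using y by blast
    qed
  qed
  have sd2: "side V E (insert c (S - {s})) (C - {c})"
    using a1 ne a2 a3 unfolding side_def by (intro conjI)
  have fS: "finite S" using SV finV by (rule finite_subset)
  have "card (insert c (S - {s})) = Suc (card (S - {s}))" using cV(2) fS by simp
  also have "\<dots> = card S" using card_Suc_Diff1[OF fS s] .
  finally have cd: "card (insert c (S - {s})) = card S" .
  have "insert c (S - {s}) \<subseteq> V" using SV cV by blast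
  hence "vertex_cut V E (insert c (S - {s}))" using sd2 by (rule side_cut)
  hence "min_vertex_cut V E (insert c (S - {s}))" using mincut_from[OF m] cd by simp
  thus ?thesis using sd2 by simp
qed

lemma side_nbhd: "v \<in> V \<Longrightarrow> card V \<ge> 7 \<Longrightarrow> side V E {y. E v y} {v}"
  unfolding side_def
proof (intro conjI)
  assume v: "v \<in> V" and n: "card V \<ge> 7"
  show "{v} \<subseteq> V - {y. E v y}" using v irr by auto
  show "{v} \<noteq> {}" by simp
  have "card (insert v {y. E v y}) \<le> Suc (card {y. E v y})" using card_insert_if[OF finN, of v] by simp
  hence "card (insert v {y. E v y}) < card V" using deg[OF v] n by simp
  hence "V - insert v {y. E v y} \<noteq> {}" using rest_ne finN by blast
  then show "V - {y. E v y} - {v} \<noteq> {}" by auto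
  show "\<forall>x\<in>{v}. \<forall>y. E x y \<longrightarrow> y \<in> V - {y. E v y} \<longrightarrow> y \<in> {v}" by auto
qed


lemma mk_side:
  assumes "X \<subseteq> V - T" "X \<noteq> {}" "finite (T \<union> X)" "card (T \<union> X) < card V"
    and cl: "\<And>x y. x \<in> X \<Longrightarrow> E x y \<Longrightarrow> y \<in> X \<union> T"
  shows "side V E T X"
proof -
  have "V - (T \<union> X) \<noteq> {}" using assms(3,4) by (rule rest_ne)
  hence "V - T - X \<noteq> {}" by blast
  moreover have "\<forall>x\<in>X. \<forall>y. E x y \<longrightarrow> y \<in> V - T \<longrightarrow> y \<in> X"
  proof (intro ballI allI impI)
    fix x y assume "x \<in> X" "E x y" "y \<in> V - T"
    thus "y \<in> X" using cl by blast
  qed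
  ultimately show ?thesis using assms(1,2) unfolding side_def by (intro conjI)
qed

lemma tri:
  assumes n7: "card V \<ge> 7" and m: "min_vertex_cut V E S" and v: "v \<in> V" and hS: "S = {y. E v y}"
    and out: "\<And>s. s \<in> S \<Longrightarrow> \<exists>d. E s d \<and> d \<in> V \<and> d \<notin> S \<and> d \<noteq> v"
    and a: "a \<in> S" and b: "b \<in> S" and c: "c \<in> S" and ab: "a \<noteq> b" and bc: "b \<noteq> c" and ac: "a \<noteq> c"
    and eab: "E a b" and ebc: "E b c" and eac: "E a c"
  shows "\<exists>S'. min_vertex_cut V E S' \<and> foresty_vertex_cut V E S'"
proof -
  have vS: "v \<notin> S" using hS irr by blast
  have cS: "card S = 4" using hS deg v by simp
  have SV: "S \<subseteq> V" using hS inV2 by blast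
  have fS: "finite S" using SV finV by (rule finite_subset)
  obtain a' where a': "E a a'" "a' \<in> V" "a' \<notin> S" "a' \<noteq> v" using out[OF a] by blast
  obtain b' where b': "E b b'" "b' \<in> V" "b' \<notin> S" "b' \<noteq> v" using out[OF b] by blast
  obtain c' where c': "E c c'" "c' \<in> V" "c' \<notin> S" "c' \<noteq> v" using out[OF c] by blast
  have eav: "E a v" "E b v" "E c v" using hS a b c sym by blast+
  have eba: "E b a" and eca: "E c a" and ecb: "E c b" using eab eac ebc sym by blast+
  have aV: "a \<in> V" "b \<in> V" "c \<in> V" using SV a b c by blast+
  have Na: "{y. E a y} = {v,b,c,a'}"
    by (rule nb4) (use aV vS a b c bc a' eav eab eac in auto)
  have Nb: "{y. E b y} = {v,a,c,b'}"
    by (rule nb4) (use aV vS a b c ac b' eav eba ebc in auto)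
  have Nc: "{y. E c y} = {v,a,b,c'}"
    by (rule nb4) (use aV vS a b c ab c' eav eca ecb in auto)
  have na: "\<And>y. E a y \<Longrightarrow> y = v \<or> y = b \<or> y = c \<or> y = a'"
  proof -
    fix y assume "E a y" hence "y \<in> {y. E a y}" by simp
    thus "y = v \<or> y = b \<or> y = c \<or> y = a'" unfolding Na by simp
  qed
  have nb: "\<And>y. E b y \<Longrightarrow> y = v \<or> y = a \<or> y = c \<or> y = b'"
  proof -
    fix y assume "E b y" hence "y \<in> {y. E b y}" by simp
    thus "y = v \<or> y = a \<or> y = c \<or> y = b'" unfolding Nb by simp
  qed
  have nc: "\<And>y. E c y \<Longrightarrow> y = v \<or> y = a \<or> y = b \<or> y = c'"
  proof -
    fix y assume "E c y" hence "y \<in> {y. E c y}" by simp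
    thus "y = v \<or> y = a \<or> y = b \<or> y = c'" unfolding Nc by simp
  qed
  obtain e where e: "e \<in> S" "e \<noteq> a" "e \<noteq> b" "e \<noteq> c"
  proof -
    have "\<not> S \<subseteq> {a,b,c}"
    proof
      assume "S \<subseteq> {a,b,c}"
      hence "card S \<le> card {a,b,c}" by (intro card_mono) auto
      thus False using c3[of a b c] cS by simp
    qed
    thus ?thesis using that by blast
  qed
  have nv: "\<And>y. E v y \<Longrightarrow> y = a \<or> y = b \<or> y = c \<or> y = e"
  proof -
    have "{y. E v y} = {a,b,c,e}"
      by (rule nb4) (use v a b c e ab bc ac hS in auto)
    moreover fix y assume "E v y" hence "y \<in> {y. E v y}" by simp
    ultimately show "y = a \<or> y = b \<or> y = c \<or> y = e" by simp
  qed
  have nea: "\<not> E e a" "\<not> E e b" "\<not> E e c"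
  proof -
    show "\<not> E e a"
    proof
      assume "E e a" hence "E a e" by (rule sym)
      thus False using na e vS a' by blast
    qed
    show "\<not> E e b"
    proof
      assume "E e b" hence "E b e" by (rule sym)
      thus False using nb e vS b' by blast
    qed
    show "\<not> E e c"
    proof
      assume "E e c" hence "E c e" by (rule sym)
      thus False using nc e vS c' by blast
    qed
  qed
  have eV: "e \<in> V" using e SV by blast
  show ?thesis
  proof (cases "a' = c' \<and> b' = c'")
    case True
    have X: "{v,a,b,c} \<subseteq> V - {e,c'}" using v aV vS a b c e c' by auto
    have "{e,c'} \<union> {v,a,b,c} = {e,c',v,a,b,c}" by blast
    hence "card ({e,c'} \<union> {v,a,b,c}) \<le> 6" using c6[of e c' v a b c] by simp
    hence "card ({e,c'} \<union> {v,a,b,c}) < card V" using n7 by simp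
    moreover have "\<And>x y. x \<in> {v,a,b,c} \<Longrightarrow> E x y \<Longrightarrow> y \<in> {v,a,b,c} \<union> {e,c'}"
    proof -
      fix x y assume "x \<in> {v,a,b,c}" "E x y"
      thus "y \<in> {v,a,b,c} \<union> {e,c'}"
        using nv na nb nc True by blast
    qed
    ultimately have sd: "side V E {e,c'} {v,a,b,c}" using mk_side[OF X] by simp
    have "{e,c'} \<subseteq> V" using eV c' by blast
    hence "vertex_cut V E {e,c'}" using sd by (rule side_cut)
    hence "card S \<le> card {e,c'}" using m unfolding min_vertex_cut_def by simp
    thus ?thesis using c2[of e c'] cS by simp
  next
    case False
    have X: "{v,c} \<subseteq> V - {a,b,e,c'}" using v aV vS a b c e c' ab bc ac by auto
    have "{a,b,e,c'} \<union> {v,c} = {a,b,e,c',v,c}" by blast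
    hence "card ({a,b,e,c'} \<union> {v,c}) \<le> 6" using c6[of a b e c' v c] by simp
    hence "card ({a,b,e,c'} \<union> {v,c}) < card V" using n7 by simp
    moreover have "\<And>x y. x \<in> {v,c} \<Longrightarrow> E x y \<Longrightarrow> y \<in> {v,c} \<union> {a,b,e,c'}"
    proof -
      fix x y assume "x \<in> {v,c}" "E x y"
      thus "y \<in> {v,c} \<union> {a,b,e,c'}"
        using nv nc by blast
    qed
    ultimately have sd: "side V E {a,b,e,c'} {v,c}" using mk_side[OF X] by simp
    have "{a,b,e,c'} \<subseteq> V" using aV eV c' by blast
    hence vc: "vertex_cut V E {a,b,e,c'}" using sd by (rule side_cut)
    hence mc: "min_vertex_cut V E {a,b,e,c'}" using mincut_from[OF m] c4[of a b e c'] cS by simp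
    have le: "\<And>y. y \<in> {a,b,e,c'} \<Longrightarrow> E e y \<Longrightarrow> y = c'"
    proof -
      fix y assume "y \<in> {a,b,e,c'}" "E e y"
      thus "y = c'" using nea irr[of e] by auto
    qed
    have "forest {a,b,e,c'} (induced E {a,b,e,c'})"
    proof (cases "a' = c'")
      case True
      hence bb: "b' \<noteq> c'" using False by blast
      have lb2: "\<And>y. y \<in> {a,b,e,c'} \<Longrightarrow> E b y \<Longrightarrow> y = a"
      proof -
        fix y assume y: "y \<in> {a,b,e,c'}" and ey: "E b y"
        have "y = v \<or> y = a \<or> y = c \<or> y = b'" using ey by (rule nb)
        thus "y = a" using y vS b' c' bc e bb a b c by auto
      qed
      show ?thesis
      proof (rule forest_W[OF sym, where W="{a,c'}"])
        show "finite {a, c'}" by simp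
        show "card {a, c'} \<le> 2" by (rule c2)
        show "\<forall>x\<in>{a,b,e,c'} - {a,c'}. \<forall>y\<in>{a,b,e,c'}. \<forall>z\<in>{a,b,e,c'}. E x y \<longrightarrow> E x z \<longrightarrow> y = z"
          using lb2 le by blast
      qed
    next
      case False
      have la2: "\<And>y. y \<in> {a,b,e,c'} \<Longrightarrow> E a y \<Longrightarrow> y = b"
      proof -
        fix y assume y: "y \<in> {a,b,e,c'}" and ey: "E a y"
        have "y = v \<or> y = b \<or> y = c \<or> y = a'" using ey by (rule na)
        thus "y = b" using y vS a' c' ac e False a b c by auto
      qed
      show ?thesis
      proof (rule forest_W[OF sym, where W="{b,c'}"])
        show "finite {b, c'}" by simp
        show "card {b, c'} \<le> 2" by (rule c2)
        show "\<forall>x\<in>{a,b,e,c'} - {b,c'}. \<forall>y\<in>{a,b,e,c'}. \<forall>z\<in>{a,b,e,c'}. E x y \<longrightarrow> E x z \<longrightarrow> y = z"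
          using la2 le by blast
      qed
    qed
    thus ?thesis using mc vc unfolding foresty_vertex_cut_def by blast
  qed
qed


lemma sq:
  assumes n7: "card V \<ge> 7" and m: "min_vertex_cut V E S" and v: "v \<in> V" and hS: "S = {y. E v y}"
    and out: "\<And>s. s \<in> S \<Longrightarrow> \<exists>d. E s d \<and> d \<in> V \<and> d \<notin> S \<and> d \<noteq> v"
    and a: "a \<in> S" and b: "b \<in> S" and c: "c \<in> S" and e: "e \<in> S"
    and ab: "a \<noteq> b" and ac: "a \<noteq> c" and ae: "a \<noteq> e" and bc: "b \<noteq> c" and be: "b \<noteq> e"
    and ce: "c \<noteq> e"
    and eab: "E a b" and ebc: "E b c" and ece: "E c e" and eea: "E e a"
  shows "\<exists>S'. min_vertex_cut V E S' \<and> foresty_vertex_cut V E S'"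
proof -
  have vS: "v \<notin> S" using hS irr by blast
  have cS: "card S = 4" using hS deg v by simp
  have SV: "S \<subseteq> V" using hS inV2 by blast
  have fS: "finite S" using SV finV by (rule finite_subset)
  obtain a' where a': "E a a'" "a' \<in> V" "a' \<notin> S" "a' \<noteq> v" using out[OF a] by blast
  obtain b' where b': "E b b'" "b' \<in> V" "b' \<notin> S" "b' \<noteq> v" using out[OF b] by blast
  obtain c' where c': "E c c'" "c' \<in> V" "c' \<notin> S" "c' \<noteq> v" using out[OF c] by blast
  obtain e' where e': "E e e'" "e' \<in> V" "e' \<notin> S" "e' \<noteq> v" using out[OF e] by blast
  have ev: "E a v" "E b v" "E c v" "E e v" using hS a b c e sym by blast+
  have eba: "E b a" and ecb: "E c b" and eec: "E e c" and eae: "E a e"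
    using eab ebc ece eea sym by blast+
  have aV: "a \<in> V" "b \<in> V" "c \<in> V" "e \<in> V" using SV a b c e by blast+
  have Na: "{y. E a y} = {v,b,e,a'}"
    by (rule nb4) (use aV vS a b c e be a' ev eab eae in auto)
  have Nb: "{y. E b y} = {v,a,c,b'}"
    by (rule nb4) (use aV vS a b c e ac b' ev eba ebc in auto)
  have Nc: "{y. E c y} = {v,b,e,c'}"
    by (rule nb4) (use aV vS a b c e be c' ev ecb ece in auto)
  have Ne: "{y. E e y} = {v,c,a,e'}"
    by (rule nb4) (use aV vS a b c e ac e' ev eec eea in auto)
  have Sabce: "S = {a,b,c,e}"
  proof -
    have s1: "{a,b,c,e} \<subseteq> S" using a b c e by blast
    moreover have "card {a,b,c,e} = 4" using ab ac ae bc be ce by simp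
    ultimately have "{a,b,c,e} = S" using card_subset_eq[OF fS s1] cS by simp
    thus ?thesis by simp
  qed
  have na: "\<And>y. E a y \<Longrightarrow> y \<in> {v,b,e,a'}" using Na by blast
  have nb: "\<And>y. E b y \<Longrightarrow> y \<in> {v,a,c,b'}" using Nb by blast
  have nc: "\<And>y. E c y \<Longrightarrow> y \<in> {v,b,e,c'}" using Nc by blast
  have ne: "\<And>y. E e y \<Longrightarrow> y \<in> {v,c,a,e'}" using Ne by blast
  have nv: "\<And>y. E v y \<Longrightarrow> y \<in> {a,b,c,e}" using hS Sabce by blast
  have X: "{v,b,e} \<subseteq> V - {a,c,b',e'}" using v aV vS a b c e b' e' ab bc be ce ae by auto
  have XS: "{v,b,e} \<subseteq> V" "{a,c,b',e'} \<subseteq> V" using v aV b' e' by auto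
  have fin: "finite ({a,c,b',e'} \<union> {v,b,e})" by simp
  have card_lt: "card ({a,c,b',e'} \<union> {v,b,e}) < card V"
  proof (rule ccontr)
    assume "\<not> ?thesis"
    hence c1: "card V \<le> card ({a,c,b',e'} \<union> {v,b,e})" by simp
    have eq7: "{a,c,b',e'} \<union> {v,b,e} = {a,c,b',e',v,b,e}" by blast
    have sub: "{a,c,b',e'} \<union> {v,b,e} \<subseteq> V" using XS by blast
    have "card ({a,c,b',e'} \<union> {v,b,e}) = card V"
      using card_mono[OF finV sub] c1 by (rule antisym)
    hence Veq: "{a,c,b',e'} \<union> {v,b,e} = V" by (rule card_subset_eq[OF finV sub])
    have bne: "b' \<noteq> e'"
    proof
      assume "b' = e'"
      hence "{a,c,b',e',v,b,e} = {a,c,b',v,b,e}" by blast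
      hence "card V \<le> 6" using c1 eq7 c6[of a c b' v b e] by simp
      thus False using n7 by simp
    qed
    define P where "P = {y. E b' y} - {e'}"
    define Q where "Q = {y. E e' y} - {b'}"
    have PS: "P \<subseteq> S"
    proof
      fix y assume y: "y \<in> P"
      hence ey: "E b' y" "y \<noteq> e'" unfolding P_def by auto
      have "y \<in> V" using ey(1) by (rule inV2)
      hence "y \<in> {a,c,b',e',v,b,e}" using Veq eq7 by simp
      moreover have "y \<noteq> b'" using ey(1) irr by blast
      moreover have "y \<noteq> v"
      proof
        assume "y = v" hence "E v b'" using sym[OF ey(1)] by simp
        thus False using hS b' by blast
      qed
      ultimately show "y \<in> S" using ey(2) a b c e by blast
    qed
    have QS: "Q \<subseteq> S"
    proof
      fix y assume y: "y \<in> Q"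
      hence ey: "E e' y" "y \<noteq> b'" unfolding Q_def by auto
      have "y \<in> V" using ey(1) by (rule inV2)
      hence "y \<in> {a,c,b',e',v,b,e}" using Veq eq7 by simp
      moreover have "y \<noteq> e'" using ey(1) irr by blast
      moreover have "y \<noteq> v"
      proof
        assume "y = v" hence "E v e'" using sym[OF ey(1)] by simp
        thus False using hS e' by blast
      qed
      ultimately show "y \<in> S" using ey(2) a b c e by blast
    qed
    have cP: "card P \<ge> 3" unfolding P_def using deg[OF b'(2)] card_Diff_singleton_if[of "{y. E b' y}" e']
      by simp
    have cQ: "card Q \<ge> 3" unfolding Q_def using deg[OF e'(2)] card_Diff_singleton_if[of "{y. E e' y}" b']
      by simp
    have fP: "finite P" "finite Q" using PS QS fS finite_subset by blast+
    have "card (P \<union> Q) \<le> 4" using card_mono[OF fS, of "P \<union> Q"] PS QS cS by simp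
    hence "card (P \<inter> Q) > 0" using card_Un_Int[OF fP] cP cQ by simp
    hence "P \<inter> Q \<noteq> {}" by (metis card.empty less_irrefl)
    then obtain x where x: "x \<in> P" "x \<in> Q" by blast
    have xS: "x \<in> {a,b,c,e}" using x PS Sabce by blast
    have xb: "E x b'" using x unfolding P_def using sym by blast
    have xe: "E x e'" using x unfolding Q_def using sym by blast
    have bo: "b' \<notin> {v,a,b,c,e}" "e' \<notin> {v,a,b,c,e}" using b' e' a b c e by auto
    have uq: "\<And>p q w. E x b' \<Longrightarrow> E x e' \<Longrightarrow> {y. E x y} = {v,p,q,w} \<Longrightarrow> p \<in> S \<Longrightarrow> q \<in> S \<Longrightarrow> False"
    proof -
      fix p q w assume h: "E x b'" "E x e'" "{y. E x y} = {v,p,q,w}" "p \<in> S" "q \<in> S"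
      have "b' \<in> {v,p,q,w}" "e' \<in> {v,p,q,w}" using h(1,2) h(3) by blast+
      hence "b' = w" "e' = w" using h(4,5) b' e' by blast+
      thus False using bne by simp
    qed
    have "x = a \<or> x = b \<or> x = c \<or> x = e" using xS by simp
    thus False
    proof (elim disjE)
      assume "x = a" thus False using uq[OF xb xe, of b e a'] Na b e by simp
    next
      assume "x = b" thus False using uq[OF xb xe, of a c b'] Nb a c by simp
    next
      assume "x = c" thus False using uq[OF xb xe, of b e c'] Nc b e by simp
    next
      assume "x = e" thus False using uq[OF xb xe, of c a e'] Ne c a by simp
    qed
  qed
  have cl: "\<And>x y. x \<in> {v,b,e} \<Longrightarrow> E x y \<Longrightarrow> y \<in> {v,b,e} \<union> {a,c,b',e'}"
  proof -
    fix x y assume x: "x \<in> {v,b,e}" and ey: "E x y"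
    { assume "x = v" hence "y \<in> {a,b,c,e}" using nv ey by blast }
    moreover
    { assume "x = b" hence "y \<in> {v,a,c,b'}" using nb ey by blast }
    moreover
    { assume "x = e" hence "y \<in> {v,c,a,e'}" using ne ey by blast }
    ultimately show "y \<in> {v,b,e} \<union> {a,c,b',e'}" using x by blast
  qed
  have sd: "side V E {a,c,b',e'} {v,b,e}" using mk_side[OF X _ fin card_lt cl] by simp
  have vc: "vertex_cut V E {a,c,b',e'}" using XS(2) sd by (rule side_cut)
  hence mc: "min_vertex_cut V E {a,c,b',e'}" using mincut_from[OF m] c4[of a c b' e'] cS by simp
  have vbe: "v \<notin> {a,c,b',e'}" "b \<notin> {a,c,b',e'}" "e \<notin> {a,c,b',e'}" using X by blast+
  have la: "\<And>y. y \<in> {a,c,b',e'} \<Longrightarrow> E a y \<Longrightarrow> y = a'"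
  proof -
    fix y assume y: "y \<in> {a,c,b',e'}" and ey: "E a y"
    have "y \<in> {v,b,e,a'}" using ey by (rule na)
    thus "y = a'" using y vbe by blast
  qed
  have lc: "\<And>y. y \<in> {a,c,b',e'} \<Longrightarrow> E c y \<Longrightarrow> y = c'"
  proof -
    fix y assume y: "y \<in> {a,c,b',e'}" and ey: "E c y"
    have "y \<in> {v,b,e,c'}" using ey by (rule nc)
    thus "y = c'" using y vbe by blast
  qed
  have "forest {a,c,b',e'} (induced E {a,c,b',e'})"
  proof (rule forest_W[OF sym, where W="{b',e'}"])
    show "finite {b', e'}" by simp
    show "card {b', e'} \<le> 2" by (rule c2)
    show "\<forall>x\<in>{a,c,b',e'} - {b',e'}. \<forall>y\<in>{a,c,b',e'}. \<forall>z\<in>{a,c,b',e'}. E x y \<longrightarrow> E x z \<longrightarrow> y = z"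
      using la lc by blast
  qed
  thus ?thesis using mc vc unfolding foresty_vertex_cut_def by blast
qed


lemma main:
  assumes n7: "card V \<ge> 7" and m: "min_vertex_cut V E S" and sd: "side V E S C"
    and least: "\<And>S' C'. min_vertex_cut V E S' \<Longrightarrow> side V E S' C' \<Longrightarrow> card C \<le> card C'"
  shows "\<exists>S. min_vertex_cut V E S \<and> foresty_vertex_cut V E S"
proof -
  have SV: "S \<subseteq> V" using m unfolding min_vertex_cut_def vertex_cut_def by simp
  have fS: "finite S" using SV finV by (rule finite_subset)
  have C: "C \<subseteq> V - S" "C \<noteq> {}" "V - S - C \<noteq> {}"
    and cl: "\<forall>x\<in>C. \<forall>y. E x y \<longrightarrow> y \<in> V - S \<longrightarrow> y \<in> C"
    using sd unfolding side_def by simp_all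
  have fC: "finite C" using C(1) finV finite_subset by blast
  have vcS: "vertex_cut V E S" using m unfolding min_vertex_cut_def by simp
  show ?thesis
  proof (cases "card C \<ge> 2")
    case True
    have light: "\<forall>x\<in>S - {}. \<forall>y\<in>S. \<forall>z\<in>S. E x y \<longrightarrow> E x z \<longrightarrow> y = z"
    proof (intro ballI impI)
      fix x y z assume x: "x \<in> S - {}" and y: "y \<in> S" and z: "z \<in> S" and exy: "E x y" and exz: "E x z"
      have xS: "x \<in> S" using x by simp
      show "y = z"
      proof (rule ccontr)
        assume yz: "y \<noteq> z"
        obtain d where d: "d \<in> V - S - C" "E x d" using L1[OF m side_sym[OF sd] xS] by blast
        obtain c1 where c1: "c1 \<in> C" "E x c1" using L1[OF m sd xS] by blast
        have "\<exists>c2\<in>C. c2 \<noteq> c1 \<and> E x c2"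
        proof (rule ccontr)
          assume "\<not> (\<exists>c2\<in>C. c2 \<noteq> c1 \<and> E x c2)"
          hence u: "\<forall>y\<in>C. E x y \<longrightarrow> y = c1" by blast
          have ne: "C - {c1} \<noteq> {}"
          proof
            assume "C - {c1} = {}"
            hence "C \<subseteq> {c1}" by blast
            hence "card C \<le> card {c1}" by (intro card_mono) simp_all
            thus False using True by simp
          qed
          have "min_vertex_cut V E (insert c1 (S - {x})) \<and> side V E (insert c1 (S - {x})) (C - {c1})"
            using L2[OF m sd xS c1(1) u ne] .
          hence "card C \<le> card (C - {c1})" using least by blast
          moreover have "card (C - {c1}) < card C" using fC c1(1) by (rule card_Diff1_less)
          ultimately show False by simp
        qed
        then obtain c2 where c2: "c2 \<in> C" "c2 \<noteq> c1" "E x c2" by blast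
        have xV: "x \<in> V" using xS SV by blast
        have "distinct [c1,c2,d,y,z]" using c1 c2 d y z yz C(1) by auto
        thus False using no5[OF xV _ c1(2) c2(3) d(2) exy exz] by blast
      qed
    qed
    have "forest S (induced E S)"
      by (rule forest_W[OF sym, where W="{}"]) (use light in simp_all)
    thus ?thesis using m vcS unfolding foresty_vertex_cut_def by blast
  next
    case False
    have "card C \<noteq> 0" using fC C(2) by simp
    hence "card C = 1" using False by simp
    then obtain v where Cv: "C = {v}" by (rule card_1_singletonE)
    have v: "v \<in> V" "v \<notin> S" using C(1) Cv by blast+
    have NS: "{y. E v y} \<subseteq> S"
    proof
      fix y assume "y \<in> {y. E v y}"
      hence ey: "E v y" by simp
      show "y \<in> S"
      proof (rule ccontr)
        assume "y \<notin> S"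
        hence "y \<in> V - S" using inV2[OF ey] by simp
        hence "y \<in> C" using cl Cv ey by blast
        hence "y = v" using Cv by simp
        thus False using ey irr by simp
      qed
    qed
    have "{y. E v y} \<subseteq> V" using inV2 by blast
    hence "vertex_cut V E {y. E v y}" using side_nbhd[OF v(1) n7] by (rule side_cut)
    hence "card S \<le> card {y. E v y}" using m unfolding min_vertex_cut_def by simp
    moreover have "card {y. E v y} \<le> card S" using card_mono[OF fS NS] .
    ultimately have "card {y. E v y} = card S" by simp
    hence hS: "S = {y. E v y}" using card_subset_eq[OF fS NS] by simp
    have out: "\<And>s. s \<in> S \<Longrightarrow> \<exists>d. E s d \<and> d \<in> V \<and> d \<notin> S \<and> d \<noteq> v"
    proof -
      fix s assume s: "s \<in> S"
      obtain d where "d \<in> V - S - C" "E s d" using L1[OF m side_sym[OF sd] s] by blast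
      thus "\<exists>d. E s d \<and> d \<in> V \<and> d \<notin> S \<and> d \<noteq> v" using Cv by blast
    qed
    show ?thesis
    proof (cases "forest S (induced E S)")
      case True
      thus ?thesis using m vcS unfolding foresty_vertex_cut_def by blast
    next
      case False
      then obtain cs where cyc: "is_cycle S (induced E S) cs" unfolding forest_def by blast
      define L where "L = length cs"
      have L3: "L \<ge> 3" and dis: "distinct cs" and sub: "set cs \<subseteq> S"
        and ed: "\<And>i. i < L \<Longrightarrow> induced E S (cs ! i) (cs ! ((i + 1) mod L))"
        using cyc unfolding is_cycle_def L_def by simp_all
      have ES: "\<And>i. i < L \<Longrightarrow> E (cs ! i) (cs ! ((i + 1) mod L))"
      proof -
        fix i assume "i < L"
        hence "induced E S (cs ! i) (cs ! ((i + 1) mod L))" by (rule ed)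
        thus "E (cs ! i) (cs ! ((i + 1) mod L))" unfolding induced_def by simp
      qed
      have inS: "\<And>i. i < L \<Longrightarrow> cs ! i \<in> S"
      proof -
        fix i assume "i < L"
        hence "cs ! i \<in> set cs" unfolding L_def by (rule nth_mem)
        thus "cs ! i \<in> S" using sub by blast
      qed
      have dn: "\<And>i j. i < L \<Longrightarrow> j < L \<Longrightarrow> i \<noteq> j \<Longrightarrow> cs ! i \<noteq> cs ! j"
        using nth_eq_iff_index_eq[OF dis] unfolding L_def by simp
      have "card (set cs) = L" using distinct_card[OF dis] unfolding L_def .
      moreover have "card (set cs) \<le> card S" using card_mono[OF fS sub] .
      moreover have "card S = 4" using hS deg v(1) by simp
      ultimately have L4: "L \<le> 4" by simp
      show ?thesis
      proof (cases "L = 3")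
        case True
        have e01: "E (cs!0) (cs!1)" using ES[of 0] True by simp
        have e12: "E (cs!1) (cs!2)" using ES[of 1] True by (simp add: numeral_2_eq_2)
        have e20: "E (cs!2) (cs!0)" using ES[of 2] True by simp
        show ?thesis
        proof (rule tri[OF n7 m v(1) hS out])
          show "cs!0 \<in> S" "cs!1 \<in> S" "cs!2 \<in> S" using inS True by simp_all
          show "cs!0 \<noteq> cs!1" using dn[of 0 1] True by simp
          show "cs!1 \<noteq> cs!2" using dn[of 1 2] True by simp
          show "cs!0 \<noteq> cs!2" using dn[of 0 2] True by simp
          show "E (cs!0) (cs!1)" "E (cs!1) (cs!2)" by fact+
          show "E (cs!0) (cs!2)" using e20 by (rule sym)
        qed
      next
        case False
        hence L: "L = 4" using L3 L4 by simp
        have e01: "E (cs!0) (cs!1)" using ES[of 0] L by simp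
        have e12: "E (cs!1) (cs!2)" using ES[of 1] L by (simp add: numeral_2_eq_2)
        have e23: "E (cs!2) (cs!3)" using ES[of 2] L by simp
        have e30: "E (cs!3) (cs!0)" using ES[of 3] L by simp
        show ?thesis
        proof (rule sq[OF n7 m v(1) hS out])
          show "cs!0 \<in> S" "cs!1 \<in> S" "cs!2 \<in> S" "cs!3 \<in> S" using inS L by simp_all
          show "cs!0 \<noteq> cs!1" using dn[of 0 1] L by simp
          show "cs!0 \<noteq> cs!2" using dn[of 0 2] L by simp
          show "cs!0 \<noteq> cs!3" using dn[of 0 3] L by simp
          show "cs!1 \<noteq> cs!2" using dn[of 1 2] L by simp
          show "cs!1 \<noteq> cs!3" using dn[of 1 3] L by simp
          show "cs!2 \<noteq> cs!3" using dn[of 2 3] L by simp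
          show "E (cs!0) (cs!1)" by (rule e01)
          show "E (cs!1) (cs!2)" by (rule e12)
          show "E (cs!2) (cs!3)" by (rule e23)
          show "E (cs!3) (cs!0)" by (rule e30)
        qed
      qed
    qed
  qed
qed

end

theorem lemma9:
  fixes V :: "'a set" and E :: "'a \<Rightarrow> 'a \<Rightarrow> bool"
  assumes "simple_graph V E"
    and "connected_graph V E"
    and "regular V E 4"
    and "card V \<ge> 7"
  shows "\<exists>S. min_vertex_cut V E S \<and> foresty_vertex_cut V E S"
proof -
  note sg = assms(1) and reg = assms(3) and n7 = assms(4)
  have "V \<noteq> {}" using n7 by auto
  then obtain v0 where v0: "v0 \<in> V" by blast
  have "{y. E v0 y} \<subseteq> V" using inV2[OF sg reg] by blast
  hence "vertex_cut V E {y. E v0 y}" using side_nbhd[OF sg reg v0 n7] by (rule side_cut)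
  hence ex1: "\<exists>k. \<exists>S. vertex_cut V E S \<and> card S = k" by blast
  obtain k where k: "\<exists>S. vertex_cut V E S \<and> card S = k"
      and kl: "\<forall>k'<k. \<not> (\<exists>S. vertex_cut V E S \<and> card S = k')"
    using ex1 exists_least_iff[of "\<lambda>k. \<exists>S. vertex_cut V E S \<and> card S = k"] by blast
  then obtain S0 where S0: "vertex_cut V E S0" "card S0 = k" by blast
  have mS0: "min_vertex_cut V E S0"
    unfolding min_vertex_cut_def
  proof (intro conjI allI impI)
    show "vertex_cut V E S0" by fact
    fix T assume "vertex_cut V E T"
    thus "card S0 \<le> card T" using kl S0(2) not_le by blast
  qed
  obtain C0 where "side V E S0 C0" using cut_side[OF S0(1)] by blast
  hence ex2: "\<exists>j. \<exists>S C. min_vertex_cut V E S \<and> side V E S C \<and> card C = j" using mS0 by blast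
  obtain j where j: "\<exists>S C. min_vertex_cut V E S \<and> side V E S C \<and> card C = j"
      and jl: "\<forall>j'<j. \<not> (\<exists>S C. min_vertex_cut V E S \<and> side V E S C \<and> card C = j')"
    using ex2 exists_least_iff[of "\<lambda>j. \<exists>S C. min_vertex_cut V E S \<and> side V E S C \<and> card C = j"]
    by blast
  then obtain S C where SC: "min_vertex_cut V E S" "side V E S C" "card C = j" by blast
  have least: "\<And>S' C'. min_vertex_cut V E S' \<Longrightarrow> side V E S' C' \<Longrightarrow> card C \<le> card C'"
    using jl SC(3) not_le by blast
  show ?thesis by (rule main[OF sg reg n7 SC(1,2) least])
qed

end
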